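(* Let $2\leq i\leq n/2$, let $e_1,\dots,e_n$ be an orthonormal basis of $\mathbb{R}^n$, and let $0<\alpha_1<\cdots<\alpha_i<\pi/2$ be such that $\pi,\alpha_1,\dots,\alpha_i$ are linearly independent over $\mathbb{Q}$. Define the $i$-dimensional subspaces $$H_1=\mathrm{lin}\{e_1,e_3,\dots,e_{2i-1}\},\qquad H_2=\mathrm{lin}\{\cos\alpha_j\, e_{2j-1}+\sin\alpha_j\, e_{2j}: j=1,\dots,i\},$$ $$H_3=\mathrm{lin}\big(\{\cos\alpha_1\, e_1+\sin\alpha_1\, e_{2i}\}\cup\{\cos\alpha_j\, e_{2j-1}+\sin\alpha_j\, e_{2j-2}: j=2,\dots,i\}\big).$$ Let $E\subset S^{n-1}$ be nonempty, closed, and such that either $R_{H_j}E=E$ for $j=1,2,3$, or $R_{H_j^\perp}E=E$ for $j=1,2,3$. Then for every $x\in E$, $S^{n-1}\cap(\mathrm{lin}\{e_1,\dots,e_{2i}\}+x)\subset E$.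
   Context: For a linear subspace $H$ of $\mathbb{R}^n$, $R_H$ is the reflection $x\mapsto 2(x|H)-x$, where $x|H$ is the orthogonal projection onto $H$; $H^\perp$ is the orthogonal complement; $\mathrm{lin}$ denotes linear hull; $S^{n-1}$ is the unit sphere. *)

theory Defs
  imports "HOL-Analysis.Analysis"
begin

definition orth_proj :: "'a::euclidean_space set \<Rightarrow> 'a \<Rightarrow> 'a" where
  "orth_proj H x = (THE y. y \<in> H \<and> (\<forall>h\<in>H. orthogonal (x - y) h))"

definition refl_sub :: "'a::euclidean_space set \<Rightarrow> 'a \<Rightarrow> 'a" where
  "refl_sub H x = 2 *\<^sub>R orth_proj H x - x"

end

theory Submission
  imports Defs "HOL-Analysis.Analysis"
begin

lemma orth_proj_unique:
  fixes H :: "'a::euclidean_space set"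
  assumes "subspace H" "y \<in> H" "\<forall>h\<in>H. orthogonal (x - y) h"
  shows "orth_proj H x = y"
  unfolding orth_proj_def
proof (rule the_equality)
  show "y \<in> H \<and> (\<forall>h\<in>H. orthogonal (x - y) h)" using assms by blast
next
  fix y' assume y': "y' \<in> H \<and> (\<forall>h\<in>H. orthogonal (x - y') h)"
  have d: "y' - y \<in> H" using assms y' by (simp add: subspace_diff)
  have "orthogonal (x - y) (y' - y)" "orthogonal (x - y') (y' - y)" using assms y' d by auto
  then have "(y' - y) \<bullet> (y' - y) = 0"
    by (simp add: orthogonal_def inner_diff_left inner_diff_right algebra_simps)
  then show "y' = y" by simp
qed

lemma orth_proj_props:
  fixes H :: "'a::euclidean_space set"
  assumes "subspace H"
  shows "orth_proj H x \<in> H \<and> (\<forall>h\<in>H. orthogonal (x - orth_proj H x) h)"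
proof -
  obtain y z where yz: "y \<in> span H" "\<And>w. w \<in> span H \<Longrightarrow> orthogonal z w" "x = y + z"
    by (rule orthogonal_subspace_decomp_exists[of H x]) blast
  have yH: "y \<in> H" using yz(1) assms by (metis span_eq_iff)
  have "\<forall>h\<in>H. orthogonal (x - y) h" using yz by (auto intro: span_base)
  then have "orth_proj H x = y" using orth_proj_unique[OF assms yH] by blast
  then show ?thesis using yH \<open>\<forall>h\<in>H. orthogonal (x - y) h\<close> by simp
qed

lemma refl_sub_invol:
  fixes H :: "'a::euclidean_space set"
  assumes "subspace H"
  shows "refl_sub H (refl_sub H x) = x"
proof -
  let ?p = "orth_proj H x"
  have P: "?p \<in> H" "\<forall>h\<in>H. orthogonal (x - ?p) h" using orth_proj_props[OF assms] by auto
  have "orth_proj H (2 *\<^sub>R ?p - x) = ?p"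
  proof (rule orth_proj_unique[OF assms P(1)], intro ballI)
    fix h assume "h \<in> H"
    then have "orthogonal (x - ?p) h" using P by auto
    then show "orthogonal (2 *\<^sub>R ?p - x - ?p) h"
      by (simp add: orthogonal_def inner_diff_left algebra_simps)
  qed
  then show ?thesis unfolding refl_sub_def by (simp add: algebra_simps)
qed

lemma refl_sub_neg:
  fixes H :: "'a::euclidean_space set"
  assumes "subspace H"
  shows "refl_sub H (- x) = - refl_sub H x"
proof -
  let ?p = "orth_proj H x"
  have P: "?p \<in> H" "\<forall>h\<in>H. orthogonal (x - ?p) h" using orth_proj_props[OF assms] by auto
  have "orth_proj H (- x) = - ?p"
  proof (rule orth_proj_unique[OF assms], simp add: P(1) assms subspace_neg, intro ballI)
    fix h assume "h \<in> H"
    then have "orthogonal (x - ?p) h" using P by auto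
    then show "orthogonal (- x - - ?p) h"
      by (simp add: orthogonal_def inner_diff_left algebra_simps)
  qed
  then show ?thesis unfolding refl_sub_def by (simp add: algebra_simps)
qed

lemma refl_sub_comp:
  fixes H :: "'a::euclidean_space set"
  assumes "subspace H"
  shows "refl_sub (orthogonal_comp H) x = - refl_sub H x"
proof -
  let ?p = "orth_proj H x"
  have P: "?p \<in> H" "\<forall>h\<in>H. orthogonal (x - ?p) h" using orth_proj_props[OF assms] by auto
  have "orth_proj (orthogonal_comp H) x = x - ?p"
  proof (rule orth_proj_unique)
    show "subspace (orthogonal_comp H)" by (rule subspace_orthogonal_comp)
    show "x - ?p \<in> orthogonal_comp H" using P by (auto simp: orthogonal_comp_def orthogonal_commute)
    show "\<forall>h\<in>orthogonal_comp H. orthogonal (x - (x - ?p)) h"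
      using P by (auto simp: orthogonal_comp_def orthogonal_commute)
  qed
  then show ?thesis unfolding refl_sub_def
    by (metis (no_types, lifting) add_diff_cancel_left' diff_add_cancel minus_diff_eq scaleR_2
        add.commute diff_diff_eq2 diff_minus_eq_add)
qed

lemma inv_iff:
  assumes "f ` E = E" "\<And>x. f (f x) = x"
  shows "x \<in> E \<longleftrightarrow> f x \<in> E"
  using assms by (metis imageE imageI)

locale onb =
  fixes e :: "nat \<Rightarrow> 'a::euclidean_space" and n :: nat
  assumes dim: "DIM('a) = n"
    and nrm: "\<forall>k\<in>{1..n}. norm (e k) = 1"
    and orth: "\<forall>k\<in>{1..n}. \<forall>l\<in>{1..n}. k \<noteq> l \<longrightarrow> e k \<bullet> e l = 0"
begin

lemma ee: "k \<in> {1..n} \<Longrightarrow> l \<in> {1..n} \<Longrightarrow> e k \<bullet> e l = (if k = l then 1 else 0)"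
  using nrm orth by (auto simp flip: power2_norm_eq_inner)

lemma span_all: "span (e ` {1..n}) = UNIV"
proof -
  have inj: "inj_on e {1..n}"
    by (rule inj_onI) (metis ee one_neq_zero)
  have "0 \<notin> e ` {1..n}" using ee by fastforce
  moreover have "pairwise orthogonal (e ` {1..n})"
    using ee by (auto simp: pairwise_def orthogonal_def)
  ultimately have ind: "independent (e ` {1..n})" by (rule pairwise_orthogonal_independent[rotated])
  have "dim (UNIV::'a set) \<le> card (e ` {1..n})"
    using inj dim by (simp add: card_image)
  then have "UNIV \<subseteq> span (e ` {1..n})"
    using card_ge_dim_independent[OF _ ind] by blast
  then show ?thesis by blast
qed

lemma ext:
  assumes "\<forall>k\<in>{1..n}. v \<bullet> e k = w \<bullet> e k"
  shows "v = w"
proof -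
  have "orthogonal (v - w) (v - w)"
  proof (rule orthogonal_to_span)
    show "v - w \<in> span (e ` {1..n})" using span_all by simp
    fix y assume "y \<in> e ` {1..n}"
    then show "orthogonal (v - w) y" using assms by (auto simp: orthogonal_def inner_diff_left)
  qed
  then show ?thesis by (simp add: orthogonal_def)
qed

lemma coord_sum: "l \<in> {1..n} \<Longrightarrow> (\<Sum>k\<in>{1..n}. c k *\<^sub>R e k) \<bullet> e l = c l"
  by (simp add: inner_sum_left ee if_distrib cong: if_cong)

lemma expand: "x = (\<Sum>k\<in>{1..n}. (x \<bullet> e k) *\<^sub>R e k)"
  proof (rule ext, intro ballI)
  fix l assume "l \<in> {1..n}"
  then show "x \<bullet> e l = (\<Sum>k\<in>{1..n}. (x \<bullet> e k) *\<^sub>R e k) \<bullet> e l" by (simp only: coord_sum)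
qed

lemma norm2: "norm x ^ 2 = (\<Sum>k\<in>{1..n}. (x \<bullet> e k) ^ 2)"
proof -
  have "norm x ^ 2 = x \<bullet> (\<Sum>k\<in>{1..n}. (x \<bullet> e k) *\<^sub>R e k)"
    by (metis expand power2_norm_eq_inner)
  also have "\<dots> = (\<Sum>k\<in>{1..n}. (x \<bullet> e k) ^ 2)"
    by (simp add: inner_sum_right power2_eq_square)
  finally show ?thesis .
qed

definition rot :: "nat \<Rightarrow> nat \<Rightarrow> real \<Rightarrow> 'a \<Rightarrow> 'a" where
  "rot a b t x = x + ((cos t - 1) * (x \<bullet> e a) - sin t * (x \<bullet> e b)) *\<^sub>R e a
     + (sin t * (x \<bullet> e a) + (cos t - 1) * (x \<bullet> e b)) *\<^sub>R e b"

lemma rot_coord: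
  assumes "a \<in> {1..n}" "b \<in> {1..n}" "a \<noteq> b" "k \<in> {1..n}"
  shows "rot a b t x \<bullet> e k =
    (if k = a then cos t * (x \<bullet> e a) - sin t * (x \<bullet> e b)
     else if k = b then sin t * (x \<bullet> e a) + cos t * (x \<bullet> e b) else x \<bullet> e k)"
  using assms by (auto simp: rot_def inner_add_left ee algebra_simps)

lemma rot_swap: "rot b a (- t) x = rot a b t x"
  by (simp add: rot_def algebra_simps)

lemma rot_inv:
  assumes "a \<in> {1..n}" "b \<in> {1..n}" "a \<noteq> b"
  shows "rot a b (- t) (rot a b t x) = x"
proof (rule ext, intro ballI)
  fix k assume k: "k \<in> {1..n}"
  have c: "cos t * cos t + sin t * sin t = 1" using sin_cos_squared_add3[of t] by (simp add: algebra_simps)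
  have 1: "cos t * (cos t * p - sin t * q) + sin t * (sin t * p + cos t * q) = p" for p q
  proof -
    have "cos t * (cos t * p - sin t * q) + sin t * (sin t * p + cos t * q) = (cos t * cos t + sin t * sin t) * p"
      by algebra
    also have "\<dots> = p" unfolding c by simp
    finally show ?thesis .
  qed
  have 2: "- (sin t * (cos t * p - sin t * q)) + cos t * (sin t * p + cos t * q) = q" for p q
  proof -
    have "- (sin t * (cos t * p - sin t * q)) + cos t * (sin t * p + cos t * q) = (cos t * cos t + sin t * sin t) * q"
      by algebra
    also have "\<dots> = q" unfolding c by simp
    finally show ?thesis .
  qed
  show "rot a b (- t) (rot a b t x) \<bullet> e k = x \<bullet> e k"
    using assms k 1 2 by (simp add: rot_coord)
qed

end

context onb begin

lemma rot_step:
  assumes "a \<in> {1..n}" "b \<in> {1..n}" "a \<noteq> b"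
  shows "\<exists>t. rot a b t w \<bullet> e a = 0 \<and> (rot a b t w \<bullet> e b)^2 = (w \<bullet> e a)^2 + (w \<bullet> e b)^2"
proof -
  define p where "p = w \<bullet> e a"
  define q where "q = w \<bullet> e b"
  have "\<exists>t. cos t * p - sin t * q = 0"
  proof (cases "p = 0 \<and> q = 0")
    case True then show ?thesis by auto
  next
    case False
    define r where "r = sqrt (p^2 + q^2)"
    have pos: "p^2 + q^2 > 0" using False by (simp add: sum_power2_gt_zero_iff)
    then have r: "r > 0" "r^2 = p^2 + q^2" by (auto simp: r_def)
    have "(q/r)^2 + (p/r)^2 = (q^2 + p^2) / r^2" by (simp add: power_divide add_divide_distrib)
    also have "\<dots> = 1"
    proof -
      have rr: "q^2 + p^2 = r^2" using r by simp
      show ?thesis unfolding rr using r(1) by simp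
    qed
    finally have "(q/r)^2 + (p/r)^2 = 1" .
    then obtain t where t: "q/r = cos t" "p/r = sin t" using sincos_total_2pi by metis
    have "cos t * p - sin t * q = (q/r)*p - (p/r)*q" using t by simp
    also have "\<dots> = 0" by (simp add: field_simps)
    finally show ?thesis by blast
  qed
  then obtain t where t: "cos t * p - sin t * q = 0" by blast
  have id: "(cos t * p - sin t * q)^2 + (sin t * p + cos t * q)^2 = p^2 + q^2"
  proof -
    have "(cos t * p - sin t * q)^2 + (sin t * p + cos t * q)^2 = ((sin t)^2 + (cos t)^2) * (p^2 + q^2)"
      by algebra
    then show ?thesis by simp
  qed
  show ?thesis
    using t id assms by (intro exI[of _ t]) (simp add: rot_coord p_def q_def)
qed

lemma chain_aux:
  assumes m0: "m0 \<le> n"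
    and F: "\<forall>k\<in>{1..<m0}. \<forall>t x. x \<in> F \<longrightarrow> rot k (Suc k) t x \<in> F"
    and x: "x \<in> F"
  shows "1 \<le> m \<Longrightarrow> m \<le> m0 \<Longrightarrow> \<exists>w\<in>F. (\<forall>k\<in>{1..<m}. w \<bullet> e k = 0) \<and> (w \<bullet> e m)^2 = (\<Sum>k\<in>{1..m}. (x \<bullet> e k)^2)
      \<and> (\<forall>k\<in>{m<..n}. w \<bullet> e k = x \<bullet> e k)"
proof (induction m)
  case 0 then show ?case by simp
next
  case (Suc m)
  show ?case
  proof (cases "m = 0")
    case True then show ?thesis using x by auto
  next
    case False
    then obtain w where w: "w \<in> F" "\<forall>k\<in>{1..<m}. w \<bullet> e k = 0" "(w \<bullet> e m)^2 = (\<Sum>k\<in>{1..m}. (x \<bullet> e k)^2)"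
      "\<forall>k\<in>{m<..n}. w \<bullet> e k = x \<bullet> e k" using Suc by auto
    have mn: "m \<in> {1..n}" "Suc m \<in> {1..n}" using Suc False m0 by auto
    obtain t where t: "rot m (Suc m) t w \<bullet> e m = 0"
      "(rot m (Suc m) t w \<bullet> e (Suc m))^2 = (w \<bullet> e m)^2 + (w \<bullet> e (Suc m))^2"
      using rot_step[OF mn] by auto
    have inF: "rot m (Suc m) t w \<in> F" using F w(1) mn Suc by auto
    show ?thesis
    proof (intro bexI[OF _ inF] conjI ballI)
      fix k assume k: "k \<in> {1..<Suc m}"
      show "rot m (Suc m) t w \<bullet> e k = 0"
      proof (cases "k = m")
        case True then show ?thesis using t by simp
      next
        case False then show ?thesis using k w(2) mn by (simp add: rot_coord)
      qed
    next
      show "(rot m (Suc m) t w \<bullet> e (Suc m))^2 = (\<Sum>k\<in>{1..Suc m}. (x \<bullet> e k)^2)"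
        using t(2) w(3) w(4) mn by simp
    next
      fix k assume k: "k \<in> {Suc m<..n}"
      then show "rot m (Suc m) t w \<bullet> e k = x \<bullet> e k" using w(4) mn by (simp add: rot_coord)
    qed
  qed
qed

lemma chain:
  assumes m0: "2 \<le> m0" "m0 \<le> n"
    and F: "\<forall>k\<in>{1..<m0}. \<forall>t x. x \<in> F \<longrightarrow> rot k (Suc k) t x \<in> F"
    and x: "x \<in> F"
  shows "\<exists>w\<in>F. (\<forall>k\<in>{1..<m0}. w \<bullet> e k = 0) \<and> w \<bullet> e m0 = sqrt (\<Sum>k\<in>{1..m0}. (x \<bullet> e k)^2)
      \<and> (\<forall>k\<in>{m0<..n}. w \<bullet> e k = x \<bullet> e k)"
proof -
  obtain w where w: "w \<in> F" "\<forall>k\<in>{1..<m0}. w \<bullet> e k = 0" "(w \<bullet> e m0)^2 = (\<Sum>k\<in>{1..m0}. (x \<bullet> e k)^2)"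
      "\<forall>k\<in>{m0<..n}. w \<bullet> e k = x \<bullet> e k" using chain_aux[OF m0(2) F x, of m0] m0 by auto
  have sq: "sqrt (\<Sum>k\<in>{1..m0}. (x \<bullet> e k)^2) = \<bar>w \<bullet> e m0\<bar>" using w(3) by (metis real_sqrt_abs)
  show ?thesis
  proof (cases "w \<bullet> e m0 \<ge> 0")
    case True then show ?thesis using w sq by (intro bexI[of _ w]) auto
  next
    case False
    have mn: "m0 - 1 \<in> {1..n}" "m0 \<in> {1..n}" "m0 - 1 \<noteq> m0" using m0 by auto
    have inF: "rot (m0 - 1) m0 pi w \<in> F" 
    proof -
      have "m0 - 1 \<in> {1..<m0}" "Suc (m0 - 1) = m0" using m0 by auto
      then show ?thesis using F w(1) by metis
    qed
    show ?thesis
    proof (intro bexI[OF _ inF] conjI ballI)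
      fix k assume k: "k \<in> {1..<m0}"
      show "rot (m0 - 1) m0 pi w \<bullet> e k = 0" using k w(2) mn by (simp add: rot_coord)
    next
      show "rot (m0 - 1) m0 pi w \<bullet> e m0 = sqrt (\<Sum>k\<in>{1..m0}. (x \<bullet> e k)^2)"
        using mn w(2) sq False by (simp add: rot_coord)
    next
      fix k assume k: "k \<in> {m0<..n}"
      then show "rot (m0 - 1) m0 pi w \<bullet> e k = x \<bullet> e k" using w(4) mn by (auto simp: rot_coord)
    qed
  qed
qed

end

locale conf = onb e n for e :: "nat \<Rightarrow> 'a::euclidean_space" and n +
  fixes i :: nat and p q :: "nat \<Rightarrow> nat" and \<alpha> :: "nat \<Rightarrow> real"
  assumes prange: "\<forall>j\<in>{1..i}. p j \<in> {1..n}"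
    and qrange: "\<forall>j\<in>{1..i}. q j \<in> {1..n}"
    and pinj: "inj_on p {1..i}" and qinj: "inj_on q {1..i}"
    and pq: "\<forall>j\<in>{1..i}. \<forall>l\<in>{1..i}. p j \<noteq> q l"
begin

definition V :: "(nat \<Rightarrow> real) \<Rightarrow> (nat \<Rightarrow> real) \<Rightarrow> 'a" where
  "V f g = (\<Sum>j\<in>{1..i}. f j *\<^sub>R e (p j) + g j *\<^sub>R e (q j))"

lemma epp: "j \<in> {1..i} \<Longrightarrow> l \<in> {1..i} \<Longrightarrow> e (p j) \<bullet> e (p l) = (if j = l then 1 else 0)"
  using ee prange pinj by (auto simp: inj_on_eq_iff)
lemma eqq: "j \<in> {1..i} \<Longrightarrow> l \<in> {1..i} \<Longrightarrow> e (q j) \<bullet> e (q l) = (if j = l then 1 else 0)"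
  using ee qrange qinj by (auto simp: inj_on_eq_iff)
lemma epq: "j \<in> {1..i} \<Longrightarrow> l \<in> {1..i} \<Longrightarrow> e (p j) \<bullet> e (q l) = 0"
  using ee prange qrange pq by auto
lemma eqp: "j \<in> {1..i} \<Longrightarrow> l \<in> {1..i} \<Longrightarrow> e (q j) \<bullet> e (p l) = 0"
  using epq by (simp add: inner_commute)

lemma V_p: "j0 \<in> {1..i} \<Longrightarrow> V f g \<bullet> e (p j0) = f j0"
proof -
  assume j0: "j0 \<in> {1..i}"
  have "V f g \<bullet> e (p j0) = (\<Sum>j\<in>{1..i}. if j = j0 then f j else 0)"
    unfolding V_def inner_sum_left
    by (rule sum.cong) (use j0 in \<open>auto simp: inner_add_left epp eqp\<close>)
  then show ?thesis using j0 by simp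
qed

lemma V_q: "j0 \<in> {1..i} \<Longrightarrow> V f g \<bullet> e (q j0) = g j0"
proof -
  assume j0: "j0 \<in> {1..i}"
  have "V f g \<bullet> e (q j0) = (\<Sum>j\<in>{1..i}. if j = j0 then g j else 0)"
    unfolding V_def inner_sum_left
    by (rule sum.cong) (use j0 in \<open>auto simp: inner_add_left eqq epq\<close>)
  then show ?thesis using j0 by simp
qed

lemma V_o: "k \<in> {1..n} \<Longrightarrow> k \<notin> p ` {1..i} \<Longrightarrow> k \<notin> q ` {1..i} \<Longrightarrow> V f g \<bullet> e k = 0"
  unfolding V_def inner_sum_left
  by (rule sum.neutral) (use prange qrange ee in \<open>force simp: inner_add_left\<close>)

lemma ext3:
  assumes "\<forall>j\<in>{1..i}. v \<bullet> e (p j) = w \<bullet> e (p j) \<and> v \<bullet> e (q j) = w \<bullet> e (q j)"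
    and "\<forall>k\<in>{1..n}. k \<notin> p ` {1..i} \<longrightarrow> k \<notin> q ` {1..i} \<longrightarrow> v \<bullet> e k = w \<bullet> e k"
  shows "v = w"
proof (rule ext, intro ballI)
  fix k assume k: "k \<in> {1..n}"
  show "v \<bullet> e k = w \<bullet> e k"
  proof (cases "k \<in> p ` {1..i} \<or> k \<in> q ` {1..i}")
    case True then show ?thesis using assms(1) by auto
  next
    case False then show ?thesis using assms(2) k by auto
  qed
qed

definition tor :: "(nat \<Rightarrow> real) \<Rightarrow> 'a \<Rightarrow> 'a" where
  "tor \<phi> x = x + V (\<lambda>j. (cos (\<phi> j) - 1) * (x \<bullet> e (p j)) - sin (\<phi> j) * (x \<bullet> e (q j)))
                    (\<lambda>j. sin (\<phi> j) * (x \<bullet> e (p j)) + (cos (\<phi> j) - 1) * (x \<bullet> e (q j)))"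

lemma tor_p: "j \<in> {1..i} \<Longrightarrow> tor \<phi> x \<bullet> e (p j) = cos (\<phi> j) * (x \<bullet> e (p j)) - sin (\<phi> j) * (x \<bullet> e (q j))"
  by (simp add: tor_def inner_add_left V_p algebra_simps)
lemma tor_q: "j \<in> {1..i} \<Longrightarrow> tor \<phi> x \<bullet> e (q j) = sin (\<phi> j) * (x \<bullet> e (p j)) + cos (\<phi> j) * (x \<bullet> e (q j))"
  by (simp add: tor_def inner_add_left V_q algebra_simps)
lemma tor_o: "k \<in> {1..n} \<Longrightarrow> k \<notin> p ` {1..i} \<Longrightarrow> k \<notin> q ` {1..i} \<Longrightarrow> tor \<phi> x \<bullet> e k = x \<bullet> e k"
  by (simp add: tor_def inner_add_left V_o)

lemma tor_add: "tor \<phi> (tor \<psi> x) = tor (\<lambda>j. \<phi> j + \<psi> j) x"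
  by (rule ext3) (auto simp: tor_p tor_q tor_o cos_add sin_add algebra_simps)

lemma rot_tor:
  assumes j0: "j0 \<in> {1..i}"
  shows "rot (p j0) (q j0) t x = tor (\<lambda>j. if j = j0 then t else 0) x"
proof (rule ext3)
  have r: "p j0 \<in> {1..n}" "q j0 \<in> {1..n}" "p j0 \<noteq> q j0" using j0 prange qrange pq by auto
  show "\<forall>j\<in>{1..i}. rot (p j0) (q j0) t x \<bullet> e (p j) = tor (\<lambda>j. if j = j0 then t else 0) x \<bullet> e (p j) \<and>
      rot (p j0) (q j0) t x \<bullet> e (q j) = tor (\<lambda>j. if j = j0 then t else 0) x \<bullet> e (q j)"
  proof
    fix j assume j: "j \<in> {1..i}"
    show "rot (p j0) (q j0) t x \<bullet> e (p j) = tor (\<lambda>j. if j = j0 then t else 0) x \<bullet> e (p j) \<and>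
      rot (p j0) (q j0) t x \<bullet> e (q j) = tor (\<lambda>j. if j = j0 then t else 0) x \<bullet> e (q j)"
    proof (cases "j = j0")
      case True then show ?thesis using r j by (simp add: rot_coord tor_p tor_q)
    next
      case False
      have d: "p j \<noteq> p j0" "p j \<noteq> q j0" "q j \<noteq> p j0" "q j \<noteq> q j0"
        using False j j0 pinj qinj by (auto simp: inj_on_eq_iff)[1]
          (use pq j j0 in blast, metis pq j j0, use False j j0 qinj in \<open>auto simp: inj_on_eq_iff\<close>)
      have jr: "p j \<in> {1..n}" "q j \<in> {1..n}" using j prange qrange by auto
      show ?thesis using r j d jr False by (simp add: rot_coord tor_p tor_q)
    qed
  qed
  show "\<forall>k\<in>{1..n}. k \<notin> p ` {1..i} \<longrightarrow> k \<notin> q ` {1..i} \<longrightarrow>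
      rot (p j0) (q j0) t x \<bullet> e k = tor (\<lambda>j. if j = j0 then t else 0) x \<bullet> e k"
    using r j0 by (auto simp: rot_coord tor_o)
qed

definition u :: "nat \<Rightarrow> 'a" where "u j = cos (\<alpha> j) *\<^sub>R e (p j) + sin (\<alpha> j) *\<^sub>R e (q j)"

lemma inner_u: "j \<in> {1..i} \<Longrightarrow> v \<bullet> u j = cos (\<alpha> j) * (v \<bullet> e (p j)) + sin (\<alpha> j) * (v \<bullet> e (q j))"
  by (simp add: u_def inner_add_right inner_commute)

lemma proj1: "orth_proj (span ((\<lambda>j. e (p j)) ` {1..i})) x = V (\<lambda>j. x \<bullet> e (p j)) (\<lambda>j. 0)"
proof (rule orth_proj_unique)
  show "subspace (span ((\<lambda>j. e (p j)) ` {1..i}))" by simp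
  show "V (\<lambda>j. x \<bullet> e (p j)) (\<lambda>j. 0) \<in> span ((\<lambda>j. e (p j)) ` {1..i})"
    unfolding V_def by (rule span_sum) (simp add: span_scale span_base)
  show "\<forall>h\<in>span ((\<lambda>j. e (p j)) ` {1..i}). orthogonal (x - V (\<lambda>j. x \<bullet> e (p j)) (\<lambda>j. 0)) h"
  proof
    fix h assume "h \<in> span ((\<lambda>j. e (p j)) ` {1..i})"
    then show "orthogonal (x - V (\<lambda>j. x \<bullet> e (p j)) (\<lambda>j. 0)) h"
      by (rule orthogonal_to_span) (auto simp: orthogonal_def inner_diff_left V_p)
  qed
qed

lemma cs_id: "cos (t::real) * (cos t * a) + sin t * (sin t * a) = a"
proof -
  have "cos t * (cos t * a) + sin t * (sin t * a) = ((sin t)^2 + (cos t)^2) * a" by algebra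
  then show ?thesis by simp
qed

lemma proj2: "orth_proj (span (u ` {1..i})) x = V (\<lambda>j. (x \<bullet> u j) * cos (\<alpha> j)) (\<lambda>j. (x \<bullet> u j) * sin (\<alpha> j))"
proof (rule orth_proj_unique)
  show "subspace (span (u ` {1..i}))" by simp
  have "V (\<lambda>j. (x \<bullet> u j) * cos (\<alpha> j)) (\<lambda>j. (x \<bullet> u j) * sin (\<alpha> j)) = (\<Sum>j\<in>{1..i}. (x \<bullet> u j) *\<^sub>R u j)"
    unfolding V_def u_def by (simp add: scaleR_add_right)
  moreover have "(\<Sum>j\<in>{1..i}. (x \<bullet> u j) *\<^sub>R u j) \<in> span (u ` {1..i})"
    by (rule span_sum) (simp add: span_scale span_base)
  ultimately show "V (\<lambda>j. (x \<bullet> u j) * cos (\<alpha> j)) (\<lambda>j. (x \<bullet> u j) * sin (\<alpha> j)) \<in> span (u ` {1..i})"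
    by simp
  show "\<forall>h\<in>span (u ` {1..i}). orthogonal (x - V (\<lambda>j. (x \<bullet> u j) * cos (\<alpha> j)) (\<lambda>j. (x \<bullet> u j) * sin (\<alpha> j))) h"
  proof
    fix h assume "h \<in> span (u ` {1..i})"
    then show "orthogonal (x - V (\<lambda>j. (x \<bullet> u j) * cos (\<alpha> j)) (\<lambda>j. (x \<bullet> u j) * sin (\<alpha> j))) h"
    proof (rule orthogonal_to_span)
      fix y assume "y \<in> u ` {1..i}"
      then obtain l where l: "l \<in> {1..i}" "y = u l" by auto
      have c: "cos (\<alpha> l) * cos (\<alpha> l) + sin (\<alpha> l) * sin (\<alpha> l) = 1"
        using sin_cos_squared_add3[of "\<alpha> l"] by (simp add: algebra_simps)
      have "V (\<lambda>j. (x \<bullet> u j) * cos (\<alpha> j)) (\<lambda>j. (x \<bullet> u j) * sin (\<alpha> j)) \<bullet> u l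
          = (x \<bullet> u l)"
        by (subst inner_u[OF l(1)], simp only: V_p[OF l(1)] V_q[OF l(1)], simp add: algebra_simps cs_id)
      then have "(x - V (\<lambda>j. (x \<bullet> u j) * cos (\<alpha> j)) (\<lambda>j. (x \<bullet> u j) * sin (\<alpha> j))) \<bullet> u l = 0"
        by (simp add: inner_diff_left)
      then show "orthogonal (x - V (\<lambda>j. (x \<bullet> u j) * cos (\<alpha> j)) (\<lambda>j. (x \<bullet> u j) * sin (\<alpha> j))) y"
        using l by (simp add: orthogonal_def)
    qed
  qed
qed

lemma refl_comp:
  "refl_sub (span ((\<lambda>j. e (p j)) ` {1..i})) (refl_sub (span (u ` {1..i})) x) = tor (\<lambda>j. - 2 * \<alpha> j) x"
proof (rule ext3)
  have c: "cos (\<alpha> j) * cos (\<alpha> j) + sin (\<alpha> j) * sin (\<alpha> j) = 1" for j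
    using sin_cos_squared_add3[of "\<alpha> j"] by (simp add: algebra_simps)
  have c2: "cos (2 * \<alpha> j) = 2 * (cos (\<alpha> j) * cos (\<alpha> j)) - 1" "cos (2 * \<alpha> j) = 1 - 2 * (sin (\<alpha> j) * sin (\<alpha> j))" for j
     apply (simp add: cos_double_cos power2_eq_square)
    apply (simp add: cos_double_sin power2_eq_square)
    done
  have cd1: "cos (\<alpha> j * 2) = 2 * (cos (\<alpha> j) * cos (\<alpha> j)) - 1" for j
    using cos_double_cos[of "\<alpha> j"] by (simp add: power2_eq_square mult.commute)
  have cd2: "cos (\<alpha> j * 2) = 1 - 2 * (sin (\<alpha> j) * sin (\<alpha> j))" for j
    using cos_double_sin[of "\<alpha> j"] by (simp add: power2_eq_square mult.commute)
  show "\<forall>j\<in>{1..i}. refl_sub (span ((\<lambda>j. e (p j)) ` {1..i})) (refl_sub (span (u ` {1..i})) x) \<bullet> e (p j) =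
           tor (\<lambda>j. - 2 * \<alpha> j) x \<bullet> e (p j) \<and>
          refl_sub (span ((\<lambda>j. e (p j)) ` {1..i})) (refl_sub (span (u ` {1..i})) x) \<bullet> e (q j) =
           tor (\<lambda>j. - 2 * \<alpha> j) x \<bullet> e (q j)"
    unfolding refl_sub_def proj1 proj2
    apply (auto simp: inner_diff_left V_p V_q tor_p tor_q inner_u sin_double)
    apply (simp add: cd1 algebra_simps)
    apply (simp add: cd2 algebra_simps)
    done
  show "\<forall>k\<in>{1..n}. k \<notin> p ` {1..i} \<longrightarrow> k \<notin> q ` {1..i} \<longrightarrow>
      refl_sub (span ((\<lambda>j. e (p j)) ` {1..i})) (refl_sub (span (u ` {1..i})) x) \<bullet> e k = tor (\<lambda>j. - 2 * \<alpha> j) x \<bullet> e k"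
    unfolding refl_sub_def proj1 proj2
    by (auto simp: inner_diff_left V_o tor_o)
qed

end

definition th :: "nat \<Rightarrow> (nat \<Rightarrow> real) \<Rightarrow> nat \<Rightarrow> real" where
  "th i \<alpha> l = (if l = i then 1 else \<alpha> (Suc l) / pi)"

lemma th_Z:
  assumes lin_indep: "\<forall>(c0::rat) (c::nat \<Rightarrow> rat).
        of_rat c0 * pi + (\<Sum>j=1..i. of_rat (c j) * \<alpha> j) = 0 \<longrightarrow>
        c0 = 0 \<and> (\<forall>j\<in>{1..i}. c j = 0)"
    and w: "(\<Sum>l\<in>{..i}. of_int (w l) * th i \<alpha> l) = 0"
  shows "\<forall>l\<in>{..i}. w l = 0"
proof -
  have "(\<Sum>l\<in>{..i}. of_int (w l) * th i \<alpha> l) = (\<Sum>l<i. of_int (w l) * th i \<alpha> l) + of_int (w i)"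
    by (simp add: lessThan_Suc_atMost[symmetric] th_def)
  also have "(\<Sum>l<i. of_int (w l) * th i \<alpha> l) = (\<Sum>l<i. of_int (w l) * \<alpha> (Suc l)) / pi"
    by (simp add: th_def sum_divide_distrib)
  also have "(\<Sum>l<i. of_int (w l) * \<alpha> (Suc l)) = (\<Sum>j=1..i. of_int (w (j - 1)) * \<alpha> j)"
    using sum_bounds_lt_plus1[of "\<lambda>j. of_int (w (j - 1)) * \<alpha> j" i] by simp
  finally have "(\<Sum>j=1..i. of_int (w (j - 1)) * \<alpha> j) / pi + of_int (w i) = 0" using w by simp
  then have "of_int (w i) * pi + (\<Sum>j=1..i. of_int (w (j - 1)) * \<alpha> j) = 0"
    by (simp add: field_simps)
  then have "of_rat (of_int (w i)) * pi + (\<Sum>j=1..i. of_rat (of_int (w (j - 1))) * \<alpha> j) = 0"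
    by simp
  then have "(of_int (w i)::rat) = 0 \<and> (\<forall>j\<in>{1..i}. (of_int (w (j - 1))::rat) = 0)"
    using lin_indep[rule_format, of "of_int (w i)" "\<lambda>j. of_int (w (j - 1))"] by blast
  then have a: "w i = 0" and b: "\<forall>j\<in>{1..i}. w (j - 1) = 0" by auto
  show ?thesis
  proof
    fix l assume "l \<in> {..i}"
    then show "w l = 0"
    proof (cases "l = i")
      case False
      then have "Suc l \<in> {1..i}" using \<open>l \<in> {..i}\<close> by auto
      then show ?thesis using b by force
    qed (use a in simp)
  qed
qed

lemma th_inj:
  assumes lin_indep: "\<forall>(c0::rat) (c::nat \<Rightarrow> rat).
        of_rat c0 * pi + (\<Sum>j=1..i. of_rat (c j) * \<alpha> j) = 0 \<longrightarrow>
        c0 = 0 \<and> (\<forall>j\<in>{1..i}. c j = 0)"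
  shows "inj_on (th i \<alpha>) {..i}"
proof (rule inj_onI, rule ccontr)
  fix a b assume ab: "a \<in> {..i}" "b \<in> {..i}" "th i \<alpha> a = th i \<alpha> b" "a \<noteq> b"
  define w :: "nat \<Rightarrow> int" where "w l = (if l = a then 1 else 0) - (if l = b then 1 else 0)" for l
  have "(\<Sum>l\<in>{..i}. of_int (w l) * th i \<alpha> l) = (\<Sum>l\<in>{..i}. (if l = a then th i \<alpha> l else 0)) - (\<Sum>l\<in>{..i}. (if l = b then th i \<alpha> l else 0))"
    unfolding sum_subtractf[symmetric] by (rule sum.cong) (auto simp: w_def)
  also have "\<dots> = 0" using ab by simp
  finally have "\<forall>l\<in>{..i}. w l = 0" using th_Z[OF lin_indep] by blast
  then have "w a = 0" using ab(1) by blast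
  then show False using ab(4) by (simp add: w_def)
qed

lemma th_indep:
  assumes lin_indep: "\<forall>(c0::rat) (c::nat \<Rightarrow> rat).
        of_rat c0 * pi + (\<Sum>j=1..i. of_rat (c j) * \<alpha> j) = 0 \<longrightarrow>
        c0 = 0 \<and> (\<forall>j\<in>{1..i}. c j = 0)"
  shows "module.independent (\<lambda>r x. of_int r * x) (th i \<alpha> ` {..i})"
proof -
  interpret Modules.module "(\<lambda>r. (*) (real_of_int r))"
    by (simp add: Modules.module.intro distrib_left mult.commute)
  have inj: "inj_on (th i \<alpha>) {..i}" by (rule th_inj[OF lin_indep])
  show ?thesis
    unfolding independent_explicit_module
  proof (intro allI impI)
    fix T u v assume T: "finite T" "T \<subseteq> th i \<alpha> ` {..i}" "(\<Sum>v\<in>T. of_int (u v) * v) = 0" "v \<in> T"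
    define w where "w l = (if th i \<alpha> l \<in> T then u (th i \<alpha> l) else 0)" for l
    have "(\<Sum>l\<in>{..i}. of_int (w l) * th i \<alpha> l) = (\<Sum>x\<in>th i \<alpha> ` {..i}. (if x \<in> T then of_int (u x) * x else 0))"
      by (subst sum.reindex[OF inj]) (auto simp: w_def intro!: sum.cong)
    also have "\<dots> = (\<Sum>x\<in>th i \<alpha> ` {..i} \<inter> T. of_int (u x) * x)"
      by (simp add: sum.inter_restrict)
    also have "th i \<alpha> ` {..i} \<inter> T = T" using T by blast
    finally have "(\<Sum>l\<in>{..i}. of_int (w l) * th i \<alpha> l) = 0" using T by simp
    then have "\<forall>l\<in>{..i}. w l = 0" by (rule th_Z[OF lin_indep])
    moreover obtain l where l: "l \<in> {..i}" "v = th i \<alpha> l" using T by blast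
    ultimately have "w l = 0" "v = th i \<alpha> l" by auto
    then show "u v = 0" using T(4) by (simp add: w_def)
  qed
qed

lemma kron_seq:
  assumes lin_indep: "\<forall>(c0::rat) (c::nat \<Rightarrow> rat).
        of_rat c0 * pi + (\<Sum>j=1..i. of_rat (c j) * \<alpha> j) = 0 \<longrightarrow>
        c0 = 0 \<and> (\<forall>j\<in>{1..i}. c j = 0)"
  shows "\<exists>k::nat \<Rightarrow> int. \<exists>m::nat \<Rightarrow> nat \<Rightarrow> int. \<forall>N. \<forall>j\<in>{1..i}.
     \<bar>of_int (k N) * (2 * \<alpha> j) - 2 * pi * of_int (m N j) - \<phi> j\<bar> < 2 * pi / (Suc N)"
proof -
  have "\<forall>N. \<exists>kk mm. \<forall>l<i. \<bar>of_int kk * th i \<alpha> l - of_int (mm l) - \<phi> (Suc l) / (2 * pi)\<bar> < 1 / Suc N"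
  proof
    fix N
    obtain kk mm where "\<And>l. l < i \<Longrightarrow> \<bar>of_int kk * th i \<alpha> l - of_int (mm l) - \<phi> (Suc l) / (2 * pi)\<bar> < 1 / Suc N"
      using Kronecker_thm_2[OF th_indep[OF lin_indep] th_inj[OF lin_indep], where \<alpha>="\<lambda>l. \<phi> (Suc l) / (2 * pi)" and \<epsilon>="1 / Suc N"]
      by (auto simp: th_def)
    then show "\<exists>kk mm. \<forall>l<i. \<bar>of_int kk * th i \<alpha> l - of_int (mm l) - \<phi> (Suc l) / (2 * pi)\<bar> < 1 / Suc N"
      by blast
  qed
  then obtain k m where km: "\<And>N l. l < i \<Longrightarrow> \<bar>of_int (k N) * th i \<alpha> l - of_int (m N l) - \<phi> (Suc l) / (2 * pi)\<bar> < 1 / Suc N"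
    by metis
  show ?thesis
  proof (intro exI allI ballI)
    fix N j assume j: "j \<in> {1..i}"
    then have l: "j - 1 < i" "Suc (j - 1) = j" by auto
    have "of_int (k N) * (2 * \<alpha> j) - 2 * pi * of_int (m N (j - 1)) - \<phi> j
        = 2 * pi * (of_int (k N) * th i \<alpha> (j - 1) - of_int (m N (j - 1)) - \<phi> (Suc (j - 1)) / (2 * pi))"
      using l by (simp add: th_def field_simps)
    also have "\<bar>\<dots>\<bar> < 2 * pi * (1 / Suc N)"
      using mult_strict_left_mono[OF km[OF l(1), of N], of "2 * pi"] by (simp add: abs_mult)
    finally show "\<bar>of_int (k N) * (2 * \<alpha> j) - 2 * pi * of_int ((\<lambda>N j. m N (j - 1)) N j) - \<phi> j\<bar> < 2 * pi / (Suc N)"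
      by simp
  qed
qed

context conf begin

lemma tor_zero: "tor (\<lambda>j. 0) x = x"
  by (simp add: tor_def V_def)

lemma tor_cong:
  assumes "\<forall>j\<in>{1..i}. cos (\<phi> j) = cos (\<psi> j) \<and> sin (\<phi> j) = sin (\<psi> j)"
  shows "tor \<phi> x = tor \<psi> x"
  unfolding tor_def V_def using assms by (intro arg_cong2[where f="(+)"] refl sum.cong) auto

lemma tor_E_int:
  assumes inv: "\<forall>x. x \<in> E \<longleftrightarrow> tor (\<lambda>j. - 2 * \<alpha> j) x \<in> E"
  shows "x \<in> E \<Longrightarrow> tor (\<lambda>j. of_int k * (2 * \<alpha> j)) x \<in> E"
proof -
  have fwd: "tor (\<lambda>j. 2 * \<alpha> j) y \<in> E" if "y \<in> E" for y
  proof -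
    have "tor (\<lambda>j. - 2 * \<alpha> j) (tor (\<lambda>j. 2 * \<alpha> j) y) = y"
      by (simp add: tor_add tor_zero)
    then have "tor (\<lambda>j. - 2 * \<alpha> j) (tor (\<lambda>j. 2 * \<alpha> j) y) \<in> E" using that by simp
    then show ?thesis using inv by blast
  qed
  have bwd: "tor (\<lambda>j. - 2 * \<alpha> j) y \<in> E" if "y \<in> E" for y using inv that by blast
  have P: "\<forall>y\<in>E. tor (\<lambda>j. real k * (2 * \<alpha> j)) y \<in> E \<and> tor (\<lambda>j. - real k * (2 * \<alpha> j)) y \<in> E" for k
  proof (induction k)
    case 0 then show ?case by (simp add: tor_zero)
  next
    case (Suc k)
    have a: "tor (\<lambda>j. real (Suc k) * (2 * \<alpha> j)) y = tor (\<lambda>j. 2 * \<alpha> j) (tor (\<lambda>j. real k * (2 * \<alpha> j)) y)" for y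
      by (simp add: tor_add algebra_simps)
    have b: "tor (\<lambda>j. - real (Suc k) * (2 * \<alpha> j)) y = tor (\<lambda>j. - 2 * \<alpha> j) (tor (\<lambda>j. - real k * (2 * \<alpha> j)) y)" for y
      by (simp add: tor_add algebra_simps)
    show ?case
    proof
      fix y assume "y \<in> E"
      then have "tor (\<lambda>j. real k * (2 * \<alpha> j)) y \<in> E" "tor (\<lambda>j. - real k * (2 * \<alpha> j)) y \<in> E"
        using Suc by auto
      then show "tor (\<lambda>j. real (Suc k) * (2 * \<alpha> j)) y \<in> E \<and> tor (\<lambda>j. - real (Suc k) * (2 * \<alpha> j)) y \<in> E"
        unfolding a b using fwd bwd by blast
    qed
  qed
  assume x: "x \<in> E"
  show ?thesis
  proof (cases "k \<ge> 0")
    case True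
    then have "(\<lambda>j. of_int k * (2 * \<alpha> j)) = (\<lambda>j. real (nat k) * (2 * \<alpha> j))" by simp
    then show ?thesis using P[of "nat k"] x by metis
  next
    case False
    then have "(\<lambda>j. of_int k * (2 * \<alpha> j)) = (\<lambda>j. - real (nat (- k)) * (2 * \<alpha> j))" by simp
    then show ?thesis using P[of "nat (- k)"] x by metis
  qed
qed

lemma kron:
  assumes closedE: "closed E"
    and inv: "\<forall>x. x \<in> E \<longleftrightarrow> tor (\<lambda>j. - 2 * \<alpha> j) x \<in> E"
    and lin_indep: "\<forall>(c0::rat) (c::nat \<Rightarrow> rat).
        of_rat c0 * pi + (\<Sum>j=1..i. of_rat (c j) * \<alpha> j) = 0 \<longrightarrow>
        c0 = 0 \<and> (\<forall>j\<in>{1..i}. c j = 0)"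
    and j0: "j0 \<in> {1..i}" and x: "x \<in> E"
  shows "rot (p j0) (q j0) t x \<in> E"
proof -
  define \<phi> where "\<phi> j = (if j = j0 then t else 0)" for j
  have "\<exists>k::nat \<Rightarrow> int. \<exists>m::nat \<Rightarrow> nat \<Rightarrow> int. \<forall>N. \<forall>j\<in>{1..i}.
     \<bar>of_int (k N) * (2 * \<alpha> j) - 2 * pi * of_int (m N j) - \<phi> j\<bar> < 2 * pi / (Suc N)"
    by (rule kron_seq[OF lin_indep])
  then obtain k m where km: "\<forall>N. \<forall>j\<in>{1..i}.
     \<bar>of_int (k N) * (2 * \<alpha> j) - 2 * pi * of_int (m N j) - \<phi> j\<bar> < 2 * pi / (Suc N)"
    by iprover
  define a where "a N j = of_int (k N) * (2 * \<alpha> j) - 2 * pi * of_int (m N j)" for N j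
  have mem: "tor (a N) x \<in> E" for N
  proof -
    have "tor (a N) x = tor (\<lambda>j. of_int (k N) * (2 * \<alpha> j)) x"
    proof (rule tor_cong, intro ballI)
      fix j
      have "a N j = of_int (k N) * (2 * \<alpha> j) + 2 * pi * of_int (- m N j)" by (simp add: a_def)
      then have "sin (a N j) = sin (of_int (k N) * (2 * \<alpha> j)) \<and> cos (a N j) = cos (of_int (k N) * (2 * \<alpha> j))"
        using sin_cos_eq_iff[of "a N j" "of_int (k N) * (2 * \<alpha> j)"] by blast
      then show "cos (a N j) = cos (of_int (k N) * (2 * \<alpha> j)) \<and> sin (a N j) = sin (of_int (k N) * (2 * \<alpha> j))"
        by simp
    qed
    then show ?thesis using tor_E_int[OF inv x] by simp
  qed
  have conv: "(\<lambda>N. a N j) \<longlonglongrightarrow> \<phi> j" if j: "j \<in> {1..i}" for j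
  proof -
    have g: "(\<lambda>N. 2 * pi / real (Suc N)) \<longlonglongrightarrow> 0"
      using LIMSEQ_Suc[OF lim_const_over_n[of "2 * pi"]] by simp
    have "(\<lambda>N. a N j - \<phi> j) \<longlonglongrightarrow> 0"
    proof (rule Lim_null_comparison[OF _ g])
      show "\<forall>\<^sub>F N in sequentially. norm (a N j - \<phi> j) \<le> 2 * pi / real (Suc N)"
      proof (rule always_eventually, rule allI)
        fix N
        have "\<bar>a N j - \<phi> j\<bar> < 2 * pi / real (Suc N)" using km j unfolding a_def by blast
        then show "norm (a N j - \<phi> j) \<le> 2 * pi / real (Suc N)" by simp
      qed
    qed
    then show ?thesis by (rule LIM_zero_cancel)
  qed
  have cosc: "(\<lambda>N. cos (a N j)) \<longlonglongrightarrow> cos (\<phi> j)" if "j \<in> {1..i}" for j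
    using conv[OF that] by (rule tendsto_cos)
  have sinc: "(\<lambda>N. sin (a N j)) \<longlonglongrightarrow> sin (\<phi> j)" if "j \<in> {1..i}" for j
    using conv[OF that] by (rule tendsto_sin)
  have "(\<lambda>N. tor (a N) x) \<longlonglongrightarrow> tor \<phi> x"
    unfolding tor_def V_def
    apply (rule tendsto_add[OF tendsto_const])
    apply (rule tendsto_sum)
    apply (intro tendsto_add tendsto_scaleR tendsto_const tendsto_diff tendsto_mult cosc sinc)
    apply assumption+
    done
  then have "tor \<phi> x \<in> E" by (rule closed_sequentially[OF closedE, rotated]) (simp add: mem)
  moreover have "(\<lambda>j. if j = j0 then t else 0) = \<phi>" by (auto simp: \<phi>_def)
  ultimately show ?thesis using rot_tor[OF j0] by simp
qed

end

theorem lemma3p6: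
  fixes e :: "nat \<Rightarrow> 'a::euclidean_space"
    and n i :: nat
    and \<alpha> :: "nat \<Rightarrow> real"
    and E :: "'a set"
  assumes dim: "DIM('a) = n"
    and i2: "2 \<le> i" and in2: "2 * i \<le> n"
    and onb_norm: "\<forall>k\<in>{1..n}. norm (e k) = 1"
    and onb_orth: "\<forall>k\<in>{1..n}. \<forall>l\<in>{1..n}. k \<noteq> l \<longrightarrow> e k \<bullet> e l = 0"
    and \<alpha>_pos: "0 < \<alpha> 1"
    and \<alpha>_mono: "\<forall>j\<in>{1..<i}. \<alpha> j < \<alpha> (Suc j)"
    and \<alpha>_lt: "\<alpha> i < pi / 2"
    and lin_indep: "\<forall>(c0::rat) (c::nat \<Rightarrow> rat).
        of_rat c0 * pi + (\<Sum>j=1..i. of_rat (c j) * \<alpha> j) = 0 \<longrightarrow>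
        c0 = 0 \<and> (\<forall>j\<in>{1..i}. c j = 0)"
    and H1_def: "H1 = span ((\<lambda>j. e (2 * j - 1)) ` {1..i})"
    and H2_def: "H2 = span ((\<lambda>j. cos (\<alpha> j) *\<^sub>R e (2 * j - 1) + sin (\<alpha> j) *\<^sub>R e (2 * j)) ` {1..i})"
    and H3_def: "H3 = span (insert (cos (\<alpha> 1) *\<^sub>R e 1 + sin (\<alpha> 1) *\<^sub>R e (2 * i))
        ((\<lambda>j. cos (\<alpha> j) *\<^sub>R e (2 * j - 1) + sin (\<alpha> j) *\<^sub>R e (2 * j - 2)) ` {2..i}))"
    and E_sub: "E \<subseteq> sphere 0 1"
    and E_ne: "E \<noteq> {}"
    and E_closed: "closed E"
    and E_inv: "(\<forall>H\<in>{H1, H2, H3}. refl_sub H ` E = E) \<or>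
                (\<forall>H\<in>{H1, H2, H3}. refl_sub (orthogonal_comp H) ` E = E)"
  shows "\<forall>x\<in>E. sphere 0 1 \<inter> {v + x | v. v \<in> span (e ` {1..2 * i})} \<subseteq> E"
proof -
  let ?J = "{1..i}"
  interpret O: onb e n using dim onb_norm onb_orth by (rule onb.intro)
  define pp where "pp j = 2 * j - 1" for j :: nat
  define q1 where "q1 j = 2 * j" for j :: nat
  define q2 where "q2 j = (if j = 1 then 2 * i else 2 * j - 2)" for j :: nat
  have pinj: "inj_on pp ?J" by (auto simp: inj_on_def pp_def)
  have q1inj: "inj_on q1 ?J" by (auto simp: inj_on_def q1_def)
  have q2inj: "inj_on q2 ?J" by (auto simp: inj_on_def q2_def split: if_splits)
  have qr: "\<forall>j\<in>?J. q2 j \<in> {1..n}" using in2 i2 by (auto simp: q2_def)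
  have pr: "\<forall>j\<in>?J. pp j \<in> {1..n}" using in2 i2 by (auto simp: pp_def)
  have pq2: "\<forall>j\<in>?J. \<forall>l\<in>?J. pp j \<noteq> q2 l" by (auto simp: pp_def q2_def; presburger)
  have q1r: "\<forall>j\<in>?J. q1 j \<in> {1..n}" using in2 i2 by (auto simp: q1_def)
  have pq1: "\<forall>j\<in>?J. \<forall>l\<in>?J. pp j \<noteq> q1 l" by (auto simp: pp_def q1_def; presburger)
  interpret P: conf e n i pp q1 \<alpha>
    by (rule conf.intro[OF O.onb_axioms], rule conf_axioms.intro[OF pr q1r pinj q1inj pq1])
  interpret Q: conf e n i pp q2 \<alpha>
    by (rule conf.intro[OF O.onb_axioms], rule conf_axioms.intro[OF pr qr pinj q2inj pq2])
  have H1: "H1 = span ((\<lambda>j. e (pp j)) ` ?J)" using H1_def by (simp add: pp_def)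
  have H2: "H2 = span (P.u ` ?J)"
  proof -
    have "P.u = (\<lambda>j. cos (\<alpha> j) *\<^sub>R e (2 * j - 1) + sin (\<alpha> j) *\<^sub>R e (2 * j))"
      by (rule ext) (simp add: P.u_def pp_def q1_def)
    then show ?thesis using H2_def by simp
  qed
  have H3: "H3 = span (Q.u ` ?J)"
  proof -
    have J: "?J = insert 1 {2..i}" using i2 by auto
    have "Q.u ` ?J = insert (cos (\<alpha> 1) *\<^sub>R e 1 + sin (\<alpha> 1) *\<^sub>R e (2 * i))
        ((\<lambda>j. cos (\<alpha> j) *\<^sub>R e (2 * j - 1) + sin (\<alpha> j) *\<^sub>R e (2 * j - 2)) ` {2..i})"
      unfolding J by (auto simp: Q.u_def pp_def q2_def)
    then show ?thesis using H3_def by simp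
  qed
  have invol: "refl_sub (span S) (refl_sub (span S) y) = y" for S y
    by (rule refl_sub_invol) simp
  have key: "x \<in> E \<longleftrightarrow> refl_sub H1 (refl_sub H x) \<in> E" if HH: "H \<in> {H2, H3}" for H x
  proof -
    have sH: "subspace H" "subspace H1" using HH H1 H2 H3 by auto
    from E_inv show ?thesis
    proof
      assume A: "\<forall>H\<in>{H1, H2, H3}. refl_sub H ` E = E"
      have "x \<in> E \<longleftrightarrow> refl_sub H x \<in> E"
        using A HH by (intro inv_iff refl_sub_invol[OF sH(1)]) auto
      also have "\<dots> \<longleftrightarrow> refl_sub H1 (refl_sub H x) \<in> E"
        using A by (intro inv_iff refl_sub_invol[OF sH(2)]) auto
      finally show ?thesis .
    next
      assume A: "\<forall>H\<in>{H1, H2, H3}. refl_sub (orthogonal_comp H) ` E = E"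
      have inv': "y \<in> E \<longleftrightarrow> - refl_sub G y \<in> E" if "G \<in> {H1, H2, H3}" "subspace G" for G y
      proof -
        have "refl_sub (orthogonal_comp G) = (\<lambda>y. - refl_sub G y)"
          by (rule ext) (rule refl_sub_comp[OF that(2)])
        moreover have "- refl_sub G (- refl_sub G z) = z" for z
          by (simp add: refl_sub_neg[OF that(2)] refl_sub_invol[OF that(2)])
        ultimately show ?thesis using A that(1) inv_iff[of "\<lambda>y. - refl_sub G y" E y] by auto
      qed
      have "x \<in> E \<longleftrightarrow> - refl_sub H x \<in> E" using inv'[OF _ sH(1)] HH by auto
      also have "\<dots> \<longleftrightarrow> - refl_sub H1 (- refl_sub H x) \<in> E" using inv'[OF _ sH(2)] by auto
      also have "- refl_sub H1 (- refl_sub H x) = refl_sub H1 (refl_sub H x)"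
        by (simp add: refl_sub_neg[OF sH(2)])
      finally show ?thesis .
    qed
  qed
  have invP: "\<forall>x. x \<in> E \<longleftrightarrow> P.tor (\<lambda>j. - 2 * \<alpha> j) x \<in> E"
    using key[of H2] P.refl_comp H1 H2 by simp
  have invQ: "\<forall>x. x \<in> E \<longleftrightarrow> Q.tor (\<lambda>j. - 2 * \<alpha> j) x \<in> E"
    using key[of H3] Q.refl_comp H1 H3 by simp
  have kP: "O.rot (pp j) (q1 j) t x \<in> E" if "j \<in> ?J" "x \<in> E" for j t x
    by (rule P.kron[OF E_closed invP lin_indep that])
  have kQ: "O.rot (pp j) (q2 j) t x \<in> E" if "j \<in> ?J" "x \<in> E" for j t x
    by (rule Q.kron[OF E_closed invQ lin_indep that])
  have GE: "\<forall>k\<in>{1..<2*i}. \<forall>t x. x \<in> E \<longrightarrow> O.rot k (Suc k) t x \<in> E"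
  proof (intro ballI allI impI)
    fix k t x assume k: "k \<in> {1..<2*i}" and x: "x \<in> E"
    show "O.rot k (Suc k) t x \<in> E"
    proof (cases "odd k")
      case True
      define j where "j = (k + 1) div 2"
      have j: "j \<in> ?J" "pp j = k" "q1 j = Suc k" using k True by (auto simp: j_def pp_def q1_def elim!: oddE)
      show ?thesis using kP[OF j(1) x, of t] j by simp
    next
      case False
      define j where "j = k div 2 + 1"
      have j: "j \<in> ?J" "pp j = Suc k" "q2 j = k" "j \<noteq> 1" using k False by (auto simp: j_def pp_def q2_def elim!: evenE)
      have "O.rot k (Suc k) t x = O.rot (pp j) (q2 j) (- t) x"
        using O.rot_swap[of "q2 j" "pp j" "- t" x] j by simp
      then show ?thesis using kQ[OF j(1) x, of "- t"] by simp
    qed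
  qed
  have GNE: "\<forall>k\<in>{1..<2*i}. \<forall>t x. x \<in> - E \<longrightarrow> O.rot k (Suc k) t x \<in> - E"
  proof (intro ballI allI impI)
    fix k t x assume k: "k \<in> {1..<2*i}" and x: "x \<in> - E"
    have kk: "k \<in> {1..n}" "Suc k \<in> {1..n}" "k \<noteq> Suc k" using k in2 by auto
    show "O.rot k (Suc k) t x \<in> - E"
    proof
      assume "O.rot k (Suc k) t x \<in> E"
      then have "O.rot k (Suc k) (- t) (O.rot k (Suc k) t x) \<in> E" using GE k by blast
      then show False using x O.rot_inv[OF kk] by simp
    qed
  qed
  have m0: "2 \<le> 2 * i" "2 * i \<le> n" using i2 in2 by auto
  show ?thesis
  proof (intro ballI subsetI)
    fix x y assume x: "x \<in> E" and y: "y \<in> sphere 0 1 \<inter> {v + x | v. v \<in> span (e ` {1..2 * i})}"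
    then obtain v where v: "v \<in> span (e ` {1..2 * i})" "y = v + x" and ny: "norm y = 1" by auto
    have nx: "norm x = 1" using x E_sub by auto
    have v0: "v \<bullet> e k = 0" if "k \<in> {2*i<..n}" for k
    proof -
      have "orthogonal (e k) v"
      proof (rule orthogonal_to_span[OF v(1)])
        fix z assume "z \<in> e ` {1..2*i}"
        then show "orthogonal (e k) z" using that O.ee by (auto simp: orthogonal_def)
      qed
      then show ?thesis by (simp add: orthogonal_def inner_commute)
    qed
    have yk: "y \<bullet> e k = x \<bullet> e k" if "k \<in> {2*i<..n}" for k
      using v0[OF that] v(2) by (simp add: inner_add_left)
    have split: "(\<Sum>k\<in>{1..n}. f k) = (\<Sum>k\<in>{1..2*i}. f k) + (\<Sum>k\<in>{2*i<..n}. f k)" for f :: "nat \<Rightarrow> real"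
    proof -
      have "{1..n} = {1..2*i} \<union> {2*i<..n}" using m0 by auto
      then show ?thesis by (simp add: sum.union_disjoint[symmetric] ivl_disj_int)
    qed
    have Seq: "(\<Sum>k\<in>{1..2*i}. (y \<bullet> e k)^2) = (\<Sum>k\<in>{1..2*i}. (x \<bullet> e k)^2)"
    proof -
      have "(\<Sum>k\<in>{1..2*i}. (y \<bullet> e k)^2) + (\<Sum>k\<in>{2*i<..n}. (y \<bullet> e k)^2) = 1"
        using O.norm2[of y] ny split by simp
      moreover have "(\<Sum>k\<in>{1..2*i}. (x \<bullet> e k)^2) + (\<Sum>k\<in>{2*i<..n}. (x \<bullet> e k)^2) = 1"
        using O.norm2[of x] nx split by simp
      moreover have "(\<Sum>k\<in>{2*i<..n}. (y \<bullet> e k)^2) = (\<Sum>k\<in>{2*i<..n}. (x \<bullet> e k)^2)"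
        using yk by simp
      ultimately show ?thesis by linarith
    qed
    show "y \<in> E"
    proof (rule ccontr)
      assume "y \<notin> E"
      then have yE: "y \<in> - E" by simp
      obtain w1 where w1: "w1 \<in> E" "\<forall>k\<in>{1..<2*i}. w1 \<bullet> e k = 0"
        "w1 \<bullet> e (2*i) = sqrt (\<Sum>k\<in>{1..2*i}. (x \<bullet> e k)^2)" "\<forall>k\<in>{2*i<..n}. w1 \<bullet> e k = x \<bullet> e k"
        using O.chain[OF m0 GE x] by blast
      obtain w2 where w2: "w2 \<in> - E" "\<forall>k\<in>{1..<2*i}. w2 \<bullet> e k = 0"
        "w2 \<bullet> e (2*i) = sqrt (\<Sum>k\<in>{1..2*i}. (y \<bullet> e k)^2)" "\<forall>k\<in>{2*i<..n}. w2 \<bullet> e k = y \<bullet> e k"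
        using O.chain[OF m0 GNE yE] by blast
      have "w1 = w2"
      proof (rule O.ext, intro ballI)
        fix k assume k: "k \<in> {1..n}"
        consider "k < 2*i" | "k = 2*i" | "k > 2*i" by linarith
        then show "w1 \<bullet> e k = w2 \<bullet> e k"
        proof cases
          case 1 then show ?thesis using k w1 w2 by auto
        next
          case 2 then show ?thesis using w1 w2 Seq by simp
        next
          case 3 then show ?thesis using k w1 w2 yk by auto
        qed
      qed
      then show False using w1 w2 by simp
    qed
  qed
qed

end
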